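(* Let $(S_t)_{t\ge1}$ be i.i.d. Bernoulli$(1/2)$ random variables, $T=T(t):=\sum_{i\le t}S_i$, $T'=t-T$, and let $(G_i)_{i\ge1}$, $(G'_i)_{i\ge1}$ be independent sequences of i.i.d. standard Gaussian random variables, independent of $(S_t)$. Then almost surely $$\frac12\Big(\frac1T\sum_{i=1}^TG_i+\frac1{T'}\sum_{i=1}^{T'}G'_i\Big)=\frac1t\Big(\sum_{i=1}^TG_i+\sum_{i=1}^{T'}G'_i\Big)+O\Big(\frac{\log\log t}{t}\Big)\quad(t\to\infty).$$ *)

theory Defs
  imports "HOL-Probability.Probability" "HOL-Library.Landau_Symbols"
begin

definition succ_count :: "(nat \<Rightarrow> 'a \<Rightarrow> real) \<Rightarrow> nat \<Rightarrow> 'a \<Rightarrow> nat" where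
  "succ_count S t \<omega> = card {i \<in> {1..t}. S i \<omega> = 1}"

definition joint_family ::
  "(nat \<Rightarrow> 'a \<Rightarrow> real) \<Rightarrow> (nat \<Rightarrow> 'a \<Rightarrow> real) \<Rightarrow> (nat \<Rightarrow> 'a \<Rightarrow> real) \<Rightarrow> nat + nat + nat \<Rightarrow> 'a \<Rightarrow> real" where
  "joint_family S G G' k = (case k of Inl n \<Rightarrow> S n | Inr (Inl n) \<Rightarrow> G n | Inr (Inr n) \<Rightarrow> G' n)"

definition joint_index :: "(nat + nat + nat) set" where
  "joint_index = {k. case k of Inl n \<Rightarrow> n \<ge> 1 | Inr (Inl n) \<Rightarrow> n \<ge> 1 | Inr (Inr n) \<Rightarrow> n \<ge> 1}"

end

theory Submission
  imports Defs
begin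


lemma subg_tail_ge:
  fixes X :: "'i \<Rightarrow> 'a \<Rightarrow> real"
  assumes P: "prob_space M" and fin: "finite I" and ne: "I \<noteq> {}"
    and indep: "prob_space.indep_vars M (\<lambda>_. borel) X I"
    and mgf: "\<And>i l. i \<in> I \<Longrightarrow> (\<integral>\<^sup>+\<omega>. ennreal (exp (l * X i \<omega>)) \<partial>M) \<le> ennreal (exp (l\<^sup>2 * c / 2))"
    and c: "c > 0" and eps: "\<epsilon> > 0"
  shows "measure M {\<omega>\<in>space M. \<epsilon> \<le> (\<Sum>i\<in>I. X i \<omega>)} \<le> exp (-\<epsilon>\<^sup>2 / (2 * c * card I))"
proof -
  interpret prob_space M by (rule P)
  have rv[measurable]: "\<And>i. i \<in> I \<Longrightarrow> X i \<in> borel_measurable M"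
    using indep unfolding indep_vars_def by auto
  define d where "d = c * real (card I)"
  have d: "d > 0" using c ne fin by (simp add: d_def card_gt_0_iff)
  define l where "l = \<epsilon> / d"
  have l: "l > 0" using eps d by (simp add: l_def)
  have "ennreal (measure M {\<omega>\<in>space M. \<epsilon> \<le> (\<Sum>i\<in>I. X i \<omega>)}) = emeasure M {\<omega>\<in>space M. (\<Sum>i\<in>I. X i \<omega>) \<ge> \<epsilon>}"
    by (simp add: emeasure_eq_measure)
  also have "\<dots> \<le> ennreal (exp (-l*\<epsilon>)) * (\<integral>\<^sup>+x. ennreal (exp (l * (\<Sum>i\<in>I. X i x))) * indicator (space M) x \<partial>M)"
    by (intro Chernoff_ineq_nn_integral_ge l) (auto intro!: borel_measurable_sum rv)
  also have "(\<integral>\<^sup>+x. ennreal (exp (l * (\<Sum>i\<in>I. X i x))) * indicator (space M) x \<partial>M) =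
             (\<integral>\<^sup>+x. (\<Prod>i\<in>I. ennreal (exp (l * X i x))) \<partial>M)"
    by (intro nn_integral_cong)
       (simp_all add: sum_distrib_left exp_sum fin prod_ennreal)
  also have "\<dots> = (\<Prod>i\<in>I. \<integral>\<^sup>+x. ennreal (exp (l * X i x)) \<partial>M)"
    by (intro indep_vars_nn_integral fin indep_vars_compose2[OF indep]) auto
  also have "ennreal (exp (-l * \<epsilon>)) * \<dots> \<le>
               ennreal (exp (-l * \<epsilon>)) * (\<Prod>i\<in>I. ennreal (exp (l\<^sup>2 * c / 2)))"
    by (intro mult_left_mono prod_mono_ennreal mgf) auto
  also have "\<dots> = ennreal (exp (-l*\<epsilon>) * exp (l\<^sup>2 * c / 2) ^ card I)"
    by (simp add: ennreal_power ennreal_mult)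
  also have "exp (-l*\<epsilon>) * exp (l\<^sup>2 * c / 2) ^ card I = exp (d * l\<^sup>2 / 2 - l * \<epsilon>)"
    by (simp only: exp_of_nat_mult[symmetric] mult_exp_exp) (simp add: d_def algebra_simps)
  also have "d * l\<^sup>2 / 2 - l * \<epsilon> = -\<epsilon>\<^sup>2 / (2 * c * card I)"
    using d by (simp add: l_def d_def field_simps power2_eq_square)
  finally show ?thesis
    by (subst (asm) ennreal_le_iff) simp_all
qed



lemma subg_tail_abs:
  fixes X :: "'i \<Rightarrow> 'a \<Rightarrow> real"
  assumes P: "prob_space M" and fin: "finite I" and ne: "I \<noteq> {}"
    and indep: "prob_space.indep_vars M (\<lambda>_. borel) X I"
    and mgf: "\<And>i l. i \<in> I \<Longrightarrow> (\<integral>\<^sup>+\<omega>. ennreal (exp (l * X i \<omega>)) \<partial>M) \<le> ennreal (exp (l\<^sup>2 * c / 2))"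
    and c: "c > 0" and eps: "\<epsilon> \<ge> 0"
  shows "measure M {\<omega>\<in>space M. \<epsilon> \<le> \<bar>\<Sum>i\<in>I. X i \<omega>\<bar>} \<le> 2 * exp (-\<epsilon>\<^sup>2 / (2 * c * card I))"
proof (cases "\<epsilon> = 0")
  case True
  interpret prob_space M by (rule P)
  have "measure M {\<omega>\<in>space M. \<epsilon> \<le> \<bar>\<Sum>i\<in>I. X i \<omega>\<bar>} \<le> 1" by simp
  then show ?thesis using True by (simp add: prob_space)
next
  case False
  interpret prob_space M by (rule P)
  have e: "\<epsilon> > 0" using False eps by simp
  have rv[measurable]: "\<And>i. i \<in> I \<Longrightarrow> X i \<in> borel_measurable M"
    using indep unfolding indep_vars_def by auto
  have indep': "indep_vars (\<lambda>_. borel) (\<lambda>i \<omega>. - X i \<omega>) I"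
    by (rule indep_vars_compose2[OF indep]) auto
  have mgf': "(\<integral>\<^sup>+\<omega>. ennreal (exp (l * - X i \<omega>)) \<partial>M) \<le> ennreal (exp (l\<^sup>2 * c / 2))" if "i \<in> I" for i l
    using mgf[OF that, of "-l"] by simp
  have "{\<omega>\<in>space M. \<epsilon> \<le> \<bar>\<Sum>i\<in>I. X i \<omega>\<bar>} =
        {\<omega>\<in>space M. \<epsilon> \<le> (\<Sum>i\<in>I. X i \<omega>)} \<union> {\<omega>\<in>space M. \<epsilon> \<le> (\<Sum>i\<in>I. - X i \<omega>)}"
    by (auto simp: sum_negf)
  also have "measure M \<dots> \<le> measure M {\<omega>\<in>space M. \<epsilon> \<le> (\<Sum>i\<in>I. X i \<omega>)} + measure M {\<omega>\<in>space M. \<epsilon> \<le> (\<Sum>i\<in>I. - X i \<omega>)}"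
    by (intro measure_Un_le) auto
  also have "\<dots> \<le> exp (-\<epsilon>\<^sup>2 / (2 * c * card I)) + exp (-\<epsilon>\<^sup>2 / (2 * c * card I))"
    by (intro add_mono subg_tail_ge[OF P fin ne indep mgf c e] subg_tail_ge[OF P fin ne indep' mgf' c e])
  finally show ?thesis by simp
qed

lemma gauss_mgf:
  assumes "distributed M lborel X std_normal_density"
  shows "(\<integral>\<^sup>+\<omega>. ennreal (exp (l * X \<omega>)) \<partial>M) = ennreal (exp (l\<^sup>2 / 2))"
proof -
  have "(\<integral>\<^sup>+\<omega>. ennreal (exp (l * X \<omega>)) \<partial>M) = (\<integral>\<^sup>+x. ennreal (std_normal_density x) * ennreal (exp (l * x)) \<partial>lborel)"
    by (rule distributed_nn_integral[OF assms, symmetric]) simp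
  also have "\<dots> = (\<integral>\<^sup>+x. ennreal (exp (l\<^sup>2 / 2)) * ennreal (std_normal_density (- l + 1 * x)) \<partial>lborel)"
  proof (intro nn_integral_cong)
    fix x :: real
    have "std_normal_density x * exp (l * x) = exp (l\<^sup>2 / 2) * std_normal_density (- l + 1 * x)"
    proof -
      have e: "- x\<^sup>2 / 2 + l * x = l\<^sup>2 / 2 + - (- l + 1 * x)\<^sup>2 / 2"
        by (simp add: power2_eq_square field_simps)
      show ?thesis unfolding std_normal_density_def
        by (simp only: mult.assoc mult.left_commute[of "exp _"] mult_exp_exp e)
    qed
    then show "ennreal (std_normal_density x) * ennreal (exp (l * x)) = ennreal (exp (l\<^sup>2 / 2)) * ennreal (std_normal_density (- l + 1 * x))"
      by (simp flip: ennreal_mult)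
  qed
  also have "\<dots> = ennreal (exp (l\<^sup>2 / 2)) * (\<integral>\<^sup>+x. ennreal (std_normal_density (- l + 1 * x)) \<partial>lborel)"
    by (rule nn_integral_cmult) simp
  also have "(\<integral>\<^sup>+x. ennreal (std_normal_density (- l + 1 * x)) \<partial>lborel) = (\<integral>\<^sup>+x. ennreal (std_normal_density x) \<partial>lborel)"
    using nn_integral_real_affine[of "\<lambda>x. ennreal (std_normal_density x)" 1 "-l"] by simp
  also have "\<dots> = 1"
    by (subst nn_integral_eq_integral) auto
  finally show ?thesis by simp
qed



lemma geom_le:
  fixes r :: real assumes "1 < r"
  shows "(\<Sum>j<L. r^j) \<le> r^L / (r - 1)"
proof -
  have "(\<Sum>j<L. r^j) = (1 - r^L) / (1 - r)" using assms by (simp add: sum_gp_strict)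
  also have "\<dots> = (r^L - 1) / (r - 1)" by (metis minus_diff_eq minus_divide_divide)
  also have "\<dots> \<le> r^L / (r - 1)" using assms by (simp add: divide_right_mono)
  finally show ?thesis .
qed

lemma ln_le_2sqrt:
  fixes x :: real assumes "0 < x"
  shows "ln x \<le> 2 * sqrt x"
proof -
  have "ln (sqrt x) \<le> sqrt x - 1" using assms by (intro ln_le_minus_one) simp
  moreover have "ln (sqrt x) = ln x / 2" using assms by (simp add: ln_sqrt)
  ultimately show ?thesis by simp
qed

lemma ln2_ge_half: "ln (2::real) \<ge> 1/2"
proof -
  have "exp (1/2::real) ^ 2 = exp 1" by (simp flip: exp_of_nat_mult)
  also have "\<dots> \<le> 2^2" using exp_le by simp
  finally have "exp (1/2::real) \<le> 2" by (rule power2_le_imp_le) simp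
  then have "ln (exp (1/2::real)) \<le> ln 2" by (subst ln_le_cancel_iff) auto
  then show ?thesis by simp
qed

lemma lnln_ge1:
  assumes "n \<ge> (27::nat)"
  shows "ln (ln (real n)) \<ge> 1" "ln (real n) \<ge> 1"
proof -
  have "exp (exp 1) \<le> exp (3::real)" using exp_le by simp
  also have "exp (3::real) = exp 1 ^ 3" by (simp flip: exp_of_nat_mult)
  also have "\<dots> \<le> 3 ^ 3" using exp_le by (intro power_mono) auto
  also have "\<dots> \<le> real n" using assms by simp
  finally have a: "exp (exp 1) \<le> real n" .
  have np: "real n > 0" using assms by simp
  have "ln (exp (exp 1)) \<le> ln (real n)" using a np by (subst ln_le_cancel_iff) auto
  then have b: "exp 1 \<le> ln (real n)" by simp
  have lp: "ln (real n) > 0" using b exp_gt_zero[of 1] by linarith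
  have "ln (exp 1) \<le> ln (ln (real n))" using b lp by (subst ln_le_cancel_iff) auto
  then show "ln (ln (real n)) \<ge> 1" by simp
  show "ln (real n) \<ge> 1" using b exp_ge_add_one_self[of 1] by simp
qed

lemma AN_term:
  assumes n: "n \<ge> (27::nat)" and L: "2^L \<le> 2*n" and j: "j < L"
  shows "sqrt (2^j * ln ((real j+2) * (real (n div 2^Suc j) + 2)))
     \<le> sqrt (3 * ln (ln (real n))) * sqrt 2 ^ j + sqrt 2 * sqrt (sqrt (3 * real n)) * sqrt (sqrt 2) ^ j"
proof -
  define a :: real where "a = 2^j"
  define q where "q = n div 2^Suc j"
  have a0: "a > 0" by (simp add: a_def)
  have l1: "ln (ln (real n)) \<ge> 1" and l2: "ln (real n) \<ge> 1" using lnln_ge1[OF n] by auto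
  have "2^Suc j * q \<le> n" unfolding q_def using div_times_less_eq_dividend[of n "2^Suc j"] by (simp add: mult.commute)
  then have "real (2^Suc j * q) \<le> real n" by (rule of_nat_mono)
  then have aq: "2 * a * real q \<le> real n" unfolding a_def by simp
  have "(2::nat)^Suc j \<le> 2^L" using j by (intro power_increasing) auto
  with L have "(2::nat)^Suc j \<le> 2 * n" by linarith
  then have "real ((2::nat)^Suc j) \<le> real (2 * n)" by (rule of_nat_mono)
  then have "2 * a \<le> 2 * real n" unfolding a_def by simp
  with aq have aq3: "a * (real q + 2) \<le> 3 * real n" by (simp add: algebra_simps)
  have "real L * ln 2 = ln (2^L)" by (simp add: ln_realpow)
  also have "\<dots> \<le> ln (2 * real n)"
  proof -
    have "real ((2::nat)^L) \<le> real (2*n)" by (rule of_nat_mono[OF L])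
    then have "(2::real)^L \<le> 2 * real n" by simp
    then show ?thesis using n by (subst ln_le_cancel_iff) auto
  qed
  also have "\<dots> = ln 2 + ln (real n)" using n by (simp add: ln_mult)
  finally have "(real L - 1) * ln 2 \<le> ln (real n)" by (simp add: algebra_simps)
  moreover have "(real L - 1) * (1/2) \<le> (real L - 1) * ln 2" if "real L \<ge> 1"
    using ln2_ge_half that by (intro mult_left_mono) auto
  ultimately have "real L - 1 \<le> 2 * ln (real n)" using l2 by (cases "real L \<ge> 1") auto
  then have jb: "real j + 2 \<le> 4 * ln (real n)" using j l2 by simp
  have "ln (real j + 2) \<le> ln (4 * ln (real n))" using jb by (subst ln_le_cancel_iff) auto
  also have "\<dots> = 2 * ln 2 + ln (ln (real n))" using l2
    by (simp add: ln_mult flip: ln_realpow[of 2 2, simplified])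
  also have "\<dots> \<le> 3 * ln (ln (real n))" using ln_2_less_1 l1 by simp
  finally have lj: "ln (real j + 2) \<le> 3 * ln (ln (real n))" .
  have lq: "ln (real q + 2) \<le> 2 * sqrt (real q + 2)" by (intro ln_le_2sqrt) simp
  have e0: "sqrt (a * ln ((real j+2) * (real q + 2))) = sqrt (a * ln (real j + 2) + a * ln (real q + 2))"
    by (subst ln_mult) (auto simp: distrib_left)
  have e1: "sqrt (a * ln (real j + 2) + a * ln (real q + 2)) \<le> sqrt (a * ln (real j + 2)) + sqrt (a * ln (real q + 2))"
    using a0 by (intro sqrt_add_le_add_sqrt) auto
  have e2: "sqrt (a * ln (real j + 2)) \<le> sqrt (3 * ln (ln (real n))) * sqrt 2 ^ j"
  proof -
    have f1: "sqrt (a * ln (real j + 2)) \<le> sqrt (a * (3 * ln (ln (real n))))"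
      using a0 lj by (intro real_sqrt_le_mono mult_left_mono) auto
    have f2: "sqrt (a * (3 * ln (ln (real n)))) = sqrt (3 * ln (ln (real n))) * sqrt 2 ^ j"
      by (simp add: a_def real_sqrt_mult real_sqrt_power)
    show ?thesis using f1 f2 by linarith
  qed
  have e3: "sqrt (a * ln (real q + 2)) \<le> sqrt 2 * sqrt (sqrt (3 * real n)) * sqrt (sqrt 2) ^ j"
  proof -
    have h1: "a * ln (real q + 2) \<le> a * (2 * sqrt (real q + 2))"
      using a0 lq by (intro mult_left_mono) auto
    have h2: "a * (2 * sqrt (real q + 2)) = 2 * sqrt a * sqrt (a * (real q + 2))"
      using a0 by (simp add: real_sqrt_mult)
    have h3: "2 * sqrt a * sqrt (a * (real q + 2)) \<le> 2 * sqrt a * sqrt (3 * real n)"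
      using aq3 a0 by (intro mult_left_mono real_sqrt_le_mono) auto
    have h4: "sqrt (2 * sqrt a * sqrt (3 * real n)) = sqrt 2 * sqrt (sqrt (3 * real n)) * sqrt (sqrt 2) ^ j"
      by (simp add: a_def real_sqrt_mult real_sqrt_power)
    have "a * ln (real q + 2) \<le> 2 * sqrt a * sqrt (3 * real n)" using h1 h2 h3 by linarith
    then have "sqrt (a * ln (real q + 2)) \<le> sqrt (2 * sqrt a * sqrt (3 * real n))" by (rule real_sqrt_le_mono)
    then show ?thesis using h4 by linarith
  qed
  show ?thesis unfolding a_def[symmetric] q_def[symmetric] using e0 e1 e2 e3 by linarith
qed



lemma AN:
  "\<exists>K0\<ge>0. \<forall>n L. n \<ge> (27::nat) \<longrightarrow> 2^L \<le> 2*n \<longrightarrow>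
     (\<Sum>j<L. sqrt (2^j * ln ((real j+2) * (real (n div 2^Suc j) + 2)))) \<le> K0 * sqrt (real n * ln (ln (real n)))"
proof -
  define r :: real where "r = sqrt (sqrt 2)"
  have r1: "r > 1" by (simp add: r_def)
  have s1: "sqrt 2 > (1::real)" by simp
  define K0 where "K0 = sqrt 3 * sqrt 2 / (sqrt 2 - 1) + sqrt 2 * sqrt (sqrt 6) / (r - 1)"
  have K0: "K0 \<ge> 0" using r1 s1 unfolding K0_def by (intro add_nonneg_nonneg divide_nonneg_pos) auto
  show ?thesis
  proof (intro exI[of _ K0] conjI K0 allI impI)
    fix n L assume n: "n \<ge> (27::nat)" and L: "2^L \<le> 2*n"
    define ll where "ll = ln (ln (real n))"
    have l1: "ll \<ge> 1" using lnln_ge1[OF n] by (simp add: ll_def)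
    have "real ((2::nat)^L) \<le> real (2*n)" by (rule of_nat_mono[OF L])
    then have L': "(2::real)^L \<le> 2 * real n" by simp
    have "(\<Sum>j<L. sqrt (2^j * ln ((real j+2) * (real (n div 2^Suc j) + 2))))
       \<le> (\<Sum>j<L. sqrt (3 * ll) * sqrt 2 ^ j + sqrt 2 * sqrt (sqrt (3 * real n)) * r ^ j)"
      unfolding ll_def r_def by (intro sum_mono AN_term[OF n L]) simp
    also have "\<dots> = sqrt (3 * ll) * (\<Sum>j<L. sqrt 2 ^ j) + sqrt 2 * sqrt (sqrt (3 * real n)) * (\<Sum>j<L. r ^ j)"
      by (simp add: sum.distrib sum_distrib_left)
    also have "\<dots> \<le> sqrt (3 * ll) * (sqrt 2 ^ L / (sqrt 2 - 1)) + sqrt 2 * sqrt (sqrt (3 * real n)) * (r ^ L / (r - 1))"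
      using l1 by (intro add_mono mult_left_mono geom_le r1 s1) auto
    also have "sqrt 2 ^ L = sqrt (2 ^ L)" by (simp add: real_sqrt_power)
    also have "r ^ L = sqrt (sqrt (2 ^ L))" by (simp add: r_def real_sqrt_power)
    also have "sqrt (3 * ll) * (sqrt (2 ^ L) / (sqrt 2 - 1)) \<le> sqrt (3 * ll) * (sqrt (2 * real n) / (sqrt 2 - 1))"
      using L' s1 l1 by (intro mult_left_mono divide_right_mono real_sqrt_le_mono) auto
    also have "sqrt 2 * sqrt (sqrt (3 * real n)) * (sqrt (sqrt (2 ^ L)) / (r - 1))
        \<le> sqrt 2 * sqrt (sqrt (3 * real n)) * (sqrt (sqrt (2 * real n)) / (r - 1))"
      using L' r1 by (intro mult_left_mono divide_right_mono real_sqrt_le_mono) auto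
    also have "sqrt (3 * ll) * (sqrt (2 * real n) / (sqrt 2 - 1)) = (sqrt 3 * sqrt 2 / (sqrt 2 - 1)) * sqrt (real n * ll)"
      by (simp add: real_sqrt_mult)
    also have "sqrt 2 * sqrt (sqrt (3 * real n)) * (sqrt (sqrt (2 * real n)) / (r - 1))
        = (sqrt 2 * sqrt (sqrt 6) / (r - 1)) * sqrt (real n)"
    proof -
      have "sqrt (sqrt (3 * real n)) * sqrt (sqrt (2 * real n)) = sqrt (sqrt (6 * (real n * real n)))"
        by (simp add: real_sqrt_mult[symmetric])
      also have "\<dots> = sqrt (sqrt 6) * sqrt (real n)" by (simp add: real_sqrt_mult)
      finally show ?thesis by (simp add: field_simps)
    qed
    also have "(sqrt 2 * sqrt (sqrt 6) / (r - 1)) * sqrt (real n) \<le> (sqrt 2 * sqrt (sqrt 6) / (r - 1)) * sqrt (real n * ll)"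
      using l1 r1 mult_left_mono[OF l1, of "real n"] by (intro mult_left_mono real_sqrt_le_mono) auto
    finally show "(\<Sum>j<L. sqrt (2^j * ln ((real j+2) * (real (n div 2^Suc j) + 2)))) \<le> K0 * sqrt (real n * ln (ln (real n)))"
      by (simp add: K0_def ll_def algebra_simps)
  qed
qed



lemma decomp:
  fixes f :: "nat \<Rightarrow> real"
  assumes "n < 2^L"
  shows "(\<Sum>i\<in>{1..n}. f i) = (\<Sum>j<L. if odd (n div 2^j) then
            (\<Sum>i\<in>{n div 2^Suc j * 2^Suc j + 1 .. n div 2^Suc j * 2^Suc j + 2^j}. f i) else 0)"
proof -
  define g where "g j = (\<Sum>i\<in>{1..n div 2^j * 2^j}. f i)" for j
  have "(\<Sum>j<L. g j - g (Suc j)) = g 0 - g L" by (rule sum_lessThan_telescope')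
  also have "g 0 = (\<Sum>i\<in>{1..n}. f i)" by (simp add: g_def)
  also have "g L = 0" using assms by (simp add: g_def)
  finally have eq: "(\<Sum>i\<in>{1..n}. f i) = (\<Sum>j<L. g j - g (Suc j))" by simp
  have tm: "g j - g (Suc j) = (if odd (n div 2^j) then
            (\<Sum>i\<in>{n div 2^Suc j * 2^Suc j + 1 .. n div 2^Suc j * 2^Suc j + 2^j}. f i) else 0)" for j
  proof -
    define a where "a = n div 2^j"
    define m where "m = n div 2^Suc j"
    have m: "m = a div 2" unfolding m_def a_def by (simp add: div_mult2_eq power_Suc2 del: power_Suc)
    have am: "a * 2^j = m * 2^Suc j + (a mod 2) * 2^j"
      unfolding m by (metis (no_types) add_mult_distrib mult.assoc mult.commute div_mult_mod_eq power_Suc)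
    show ?thesis
    proof (cases "odd a")
      case True
      then have "a mod 2 = 1" by (simp add: odd_iff_mod_2_eq_one)
      with am have am': "a * 2^j = m * 2^Suc j + 2^j" by simp
      have "g j = (\<Sum>i\<in>{1..m * 2^Suc j}. f i) + (\<Sum>i\<in>{m * 2^Suc j + 1..m * 2^Suc j + 2^j}. f i)"
        unfolding g_def a_def[symmetric] am' by (rule sum.ub_add_nat) simp
      moreover have "g (Suc j) = (\<Sum>i\<in>{1..m * 2^Suc j}. f i)" by (simp add: g_def m_def)
      ultimately show ?thesis using True by (simp add: a_def m_def)
    next
      case False
      then have "a mod 2 = 0" by simp
      with am have e: "a * 2^j = m * 2^Suc j" by simp
      have "g j = g (Suc j)" unfolding g_def by (simp only: a_def[symmetric] m_def[symmetric] e)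
      then show ?thesis using False by (simp add: a_def)
    qed
  qed
  show ?thesis unfolding eq by (rule sum.cong) (simp_all add: tm)
qed



lemma prod_encode_bound:
  "real (prod_encode (j, q)) + 1 \<le> ((real j + 2) * (real q + 2))^2"
proof -
  have t: "triangle m \<le> m * (m + 1)" for m unfolding triangle_def by simp
  have "prod_encode (j, q) + 1 \<le> (j + q) * (j + q + 1) + j + 1"
    unfolding prod_encode_def using t[of "j+q"] by simp
  also have "\<dots> \<le> (j + q + 2)^2" by (simp add: power2_eq_square algebra_simps)
  also have "\<dots> \<le> ((j + 2) * (q + 2))^2" by (intro power_mono) (auto simp: algebra_simps)
  finally have "real (prod_encode (j, q) + 1) \<le> real (((j + 2) * (q + 2))^2)" by (rule of_nat_mono)
  then show ?thesis by (simp add: algebra_simps)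
qed

lemma summable_inv_sq: "summable (\<lambda>k. 2 / (real k + 1)^2)"
proof -
  have "summable (\<lambda>n. inverse (real n ^ 2))" by (rule inverse_power_summable) simp
  then have "summable (\<lambda>n. inverse (real (Suc n) ^ 2))" by (subst summable_Suc_iff)
  then have "summable (\<lambda>n. 2 * inverse (real (Suc n) ^ 2))" by (rule summable_mult)
  then show ?thesis by (simp add: field_simps add.commute)
qed

lemma chain_AE:
  fixes X :: "nat \<Rightarrow> 'a \<Rightarrow> real"
  assumes P: "prob_space M"
    and meas: "\<And>i. i \<ge> 1 \<Longrightarrow> X i \<in> borel_measurable M"
    and C: "C > 0"
    and tail: "\<And>a b \<epsilon>. a < b \<Longrightarrow> 0 \<le> \<epsilon> \<Longrightarrow>
        measure M {\<omega>\<in>space M. \<epsilon> \<le> \<bar>\<Sum>i\<in>{Suc a..b}. X i \<omega>\<bar>} \<le> 2 * exp (-\<epsilon>\<^sup>2 / (C * real (b - a)))"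
  shows "AE \<omega> in M. \<exists>K. \<forall>n\<ge>27. \<bar>\<Sum>i\<in>{1..n}. X i \<omega>\<bar> \<le> K * sqrt (real n * ln (ln (real n)))"
proof -
  interpret prob_space M by (rule P)
  define D where "D j q \<omega> = (\<Sum>i\<in>{q*2^Suc j + 1 .. q*2^Suc j + 2^j}. X i \<omega>)" for j q :: nat and \<omega>
  define eps where "eps j q = sqrt (C * 2^j * (4 * ln ((real j + 2) * (real q + 2))))" for j q :: nat
  define A where "A k = {\<omega>\<in>space M. eps (fst (prod_decode k)) (snd (prod_decode k))
      \<le> \<bar>D (fst (prod_decode k)) (snd (prod_decode k)) \<omega>\<bar>}" for k
  have Dm[measurable]: "D j q \<in> borel_measurable M" for j q
    unfolding D_def by (intro borel_measurable_sum meas) auto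
  have Am[measurable]: "A k \<in> sets M" for k unfolding A_def by measurable
  have Ab: "measure M (A k) \<le> 2 / (real k + 1)^2" for k
  proof -
    obtain j q where k: "prod_decode k = (j,q)" by (cases "prod_decode k")
    have kk: "k = prod_encode (j,q)" by (metis k prod_decode_inverse)
    define y where "y = (real j + 2) * (real q + 2)"
    have y: "y \<ge> 1" unfolding y_def
      using mult_mono[of 1 "real j + 2" 1 "real q + 2"] by simp
    have "measure M (A k) = measure M {\<omega>\<in>space M. eps j q \<le> \<bar>\<Sum>i\<in>{Suc (q*2^Suc j) .. q*2^Suc j + 2^j}. X i \<omega>\<bar>}"
      by (simp add: A_def k D_def)
    also have "\<dots> \<le> 2 * exp (-(eps j q)\<^sup>2/(C * real (q*2^Suc j + 2^j - q*2^Suc j)))"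
      using C y by (intro tail) (auto simp: eps_def y_def[symmetric])
    also have "(eps j q)\<^sup>2 = C * 2^j * (4 * ln y)"
      unfolding eps_def y_def[symmetric] using C y by (intro real_sqrt_pow2) auto
    also have "real (q*2^Suc j + 2^j - q*2^Suc j) = 2^j" by simp
    also have "-(C * 2^j * (4 * ln y))/(C * 2^j) = -(4 * ln y)" using C by simp
    also have "exp (-(4*ln y)) = 1 / y^4"
    proof -
      have "exp (4 * ln y) = y^4" using y by (simp add: exp_of_nat_mult[of 4, simplified])
      then show ?thesis by (simp add: exp_minus field_simps)
    qed
    also have "2 * (1 / y^4) \<le> 2 / (real k + 1)^2"
    proof -
      have "real k + 1 \<le> y^2" using prod_encode_bound[of j q] by (simp add: kk y_def)
      then have "(real k + 1)^2 \<le> (y^2)^2" by (intro power_mono) auto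
      then have "(real k + 1)^2 \<le> y^4" by (simp flip: power_mult)
      then have "1 / y^4 \<le> 1 / (real k + 1)^2" using y by (intro divide_left_mono) auto
      then show ?thesis by simp
    qed
    finally show ?thesis .
  qed
  have AE1: "AE \<omega> in M. eventually (\<lambda>k. \<omega> \<in> space M - A k) sequentially"
  proof (rule borel_cantelli_AE1)
    show "summable (\<lambda>k. measure M (A k))"
      by (rule summable_comparison_test'[OF summable_inv_sq, of 0]) (use Ab in auto)
  qed (auto simp: emeasure_eq_measure)
  obtain K0 where K0: "K0 \<ge> 0" and K0b: "\<And>n L. n \<ge> (27::nat) \<Longrightarrow> 2^L \<le> 2*n \<Longrightarrow>
     (\<Sum>j<L. sqrt (2^j * ln ((real j+2) * (real (n div 2^Suc j) + 2)))) \<le> K0 * sqrt (real n * ln (ln (real n)))"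
    using AN by blast
  show ?thesis using AE1
  proof eventually_elim
    case (elim \<omega>)
    then obtain N where N: "\<And>k. k \<ge> N \<Longrightarrow> \<omega> \<in> space M - A k" by (auto simp: eventually_sequentially)
    have good: "\<bar>D j q \<omega>\<bar> < eps j q" if "prod_encode (j,q) \<ge> N" for j q
      using N[OF that] by (auto simp: A_def)
    define K\<omega> where "K\<omega> = (\<Sum>k<N. \<bar>D (fst (prod_decode k)) (snd (prod_decode k)) \<omega>\<bar>)"
    have Kw0: "K\<omega> \<ge> 0" unfolding K\<omega>_def by (intro sum_nonneg) auto
    show ?case
    proof (intro exI[of _ "K\<omega> + sqrt (4*C) * K0"] allI impI)
      fix n :: nat assume n: "n \<ge> 27"
      obtain L0 where L0: "2^L0 \<le> n" "n < 2^(L0+1)" using ex_power_ivl1[of 2 n] n by auto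
      define L where "L = L0 + 1"
      have nL: "n < 2^L" and L2: "2^L \<le> 2*n" using L0 by (auto simp: L_def)
      define q where "q j = n div 2^Suc j" for j
      have "\<bar>\<Sum>i\<in>{1..n}. X i \<omega>\<bar> = \<bar>\<Sum>j<L. if odd (n div 2^j) then D j (q j) \<omega> else 0\<bar>"
        by (simp only: decomp[OF nL] D_def q_def)
      also have "\<dots> \<le> (\<Sum>j<L. \<bar>if odd (n div 2^j) then D j (q j) \<omega> else 0\<bar>)" by (rule sum_abs)
      also have "\<dots> \<le> (\<Sum>j<L. (if prod_encode (j, q j) < N then \<bar>D j (q j) \<omega>\<bar> else 0) + eps j (q j))"
      proof (intro sum_mono)
        fix j
        have "1 \<le> (real j + 2) * (real (q j) + 2)" using mult_mono[of 1 "real j + 2" 1 "real (q j) + 2"] by simp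
        then have e0: "eps j (q j) \<ge> 0" using C by (simp add: eps_def)
        show "\<bar>if odd (n div 2^j) then D j (q j) \<omega> else 0\<bar> \<le> (if prod_encode (j, q j) < N then \<bar>D j (q j) \<omega>\<bar> else 0) + eps j (q j)"
          using good[of j "q j"] e0 by (auto simp: not_less)
      qed
      also have "\<dots> = (\<Sum>j<L. if prod_encode (j, q j) < N then \<bar>D j (q j) \<omega>\<bar> else 0) + (\<Sum>j<L. eps j (q j))"
        by (rule sum.distrib)
      also have "(\<Sum>j<L. if prod_encode (j, q j) < N then \<bar>D j (q j) \<omega>\<bar> else 0) \<le> K\<omega>"
      proof -
        define J where "J = {j\<in>{..<L}. prod_encode (j, q j) < N}"
        have "(\<Sum>j<L. if prod_encode (j, q j) < N then \<bar>D j (q j) \<omega>\<bar> else 0) = (\<Sum>j\<in>J. \<bar>D j (q j) \<omega>\<bar>)"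
          unfolding J_def by (rule sum.inter_filter[symmetric]) simp
        also have "\<dots> = (\<Sum>k\<in>(\<lambda>j. prod_encode (j, q j)) ` J. \<bar>D (fst (prod_decode k)) (snd (prod_decode k)) \<omega>\<bar>)"
        proof (subst sum.reindex)
          show "inj_on (\<lambda>j. prod_encode (j, q j)) J"
            by (rule inj_onI) (metis fst_conv prod_encode_inverse)
        qed simp
        also have "\<dots> \<le> K\<omega>" unfolding K\<omega>_def
          by (intro sum_mono2) (auto simp: J_def)
        finally show ?thesis .
      qed
      also have "(\<Sum>j<L. eps j (q j)) = sqrt (4*C) * (\<Sum>j<L. sqrt (2^j * ln ((real j+2) * (real (n div 2^Suc j) + 2))))"
        by (simp add: sum_distrib_left eps_def q_def real_sqrt_mult[symmetric] mult_ac)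
      also have "\<dots> \<le> sqrt (4*C) * (K0 * sqrt (real n * ln (ln (real n))))"
        using C by (intro mult_left_mono K0b[OF n L2]) auto
      also have "K\<omega> \<le> K\<omega> * sqrt (real n * ln (ln (real n)))"
      proof -
        have "1 \<le> real n * ln (ln (real n))" using lnln_ge1(1)[OF n] n
          using mult_mono[of 1 "real n" 1 "ln (ln (real n))"] by simp
        then show ?thesis using Kw0 mult_left_mono[of 1 "sqrt (real n * ln (ln (real n)))" K\<omega>] by simp
      qed
      finally show "\<bar>\<Sum>i\<in>{1..n}. X i \<omega>\<bar> \<le> (K\<omega> + sqrt (4*C) * K0) * sqrt (real n * ln (ln (real n)))"
        by (simp add: algebra_simps)
    qed
  qed
qed



lemma G_tail:
  fixes M :: "'a measure" and S G G' :: "nat \<Rightarrow> 'a \<Rightarrow> real"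
  assumes P: "prob_space M"
    and indep: "prob_space.indep_vars M (\<lambda>_. borel) (joint_family S G G') joint_index"
    and gauss: "\<And>n. n \<ge> 1 \<Longrightarrow> distributed M lborel (G n) std_normal_density"
    and ab: "a < b" and eps: "0 \<le> \<epsilon>"
  shows "measure M {\<omega>\<in>space M. \<epsilon> \<le> \<bar>\<Sum>i\<in>{Suc a..b}. G i \<omega>\<bar>} \<le> 2 * exp (-\<epsilon>\<^sup>2 / (2 * real (b - a)))"
proof -
  interpret prob_space M by (rule P)
  define I :: "(nat + nat + nat) set" where "I = (\<lambda>i. Inr (Inl i)) ` {Suc a..b}"
  have inj: "inj_on (\<lambda>i. Inr (Inl i) :: nat + nat + nat) {Suc a..b}" by (auto simp: inj_on_def)
  have sub: "I \<subseteq> joint_index" by (auto simp: I_def joint_index_def)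
  have ind: "indep_vars (\<lambda>_. borel) (joint_family S G G') I" by (rule indep_vars_subset[OF indep sub])
  have cardI: "card I = b - a" unfolding I_def using card_image[OF inj] by simp
  have sumI: "(\<Sum>k\<in>I. joint_family S G G' k \<omega>) = (\<Sum>i\<in>{Suc a..b}. G i \<omega>)" for \<omega>
    unfolding I_def by (subst sum.reindex[OF inj]) (simp_all add: joint_family_def)
  have "measure M {\<omega>\<in>space M. \<epsilon> \<le> \<bar>\<Sum>k\<in>I. joint_family S G G' k \<omega>\<bar>} \<le> 2 * exp (-\<epsilon>\<^sup>2 / (2 * 1 * real (card I)))"
  proof (rule subg_tail_abs[OF P _ _ ind _ _ eps])
    show "finite I" by (simp add: I_def)
    show "I \<noteq> {}" using ab by (simp add: I_def)
    fix k l assume "k \<in> I"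
    then obtain i where i: "i \<ge> 1" "k = Inr (Inl i)" by (auto simp: I_def)
    show "(\<integral>\<^sup>+\<omega>. ennreal (exp (l * joint_family S G G' k \<omega>)) \<partial>M) \<le> ennreal (exp (l\<^sup>2 * 1 / 2))"
      using gauss_mgf[OF gauss[OF i(1)], of l] i by (simp add: joint_family_def)
  qed simp
  then show ?thesis by (simp add: sumI cardI)
qed

lemma G2_tail:
  fixes M :: "'a measure" and S G G' :: "nat \<Rightarrow> 'a \<Rightarrow> real"
  assumes P: "prob_space M"
    and indep: "prob_space.indep_vars M (\<lambda>_. borel) (joint_family S G G') joint_index"
    and gauss': "\<And>n. n \<ge> 1 \<Longrightarrow> distributed M lborel (G' n) std_normal_density"
    and ab: "a < b" and eps: "0 \<le> \<epsilon>"
  shows "measure M {\<omega>\<in>space M. \<epsilon> \<le> \<bar>\<Sum>i\<in>{Suc a..b}. G' i \<omega>\<bar>} \<le> 2 * exp (-\<epsilon>\<^sup>2 / (2 * real (b - a)))"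
proof -
  interpret prob_space M by (rule P)
  define I :: "(nat + nat + nat) set" where "I = (\<lambda>i. Inr (Inr i)) ` {Suc a..b}"
  have inj: "inj_on (\<lambda>i. Inr (Inr i) :: nat + nat + nat) {Suc a..b}" by (auto simp: inj_on_def)
  have sub: "I \<subseteq> joint_index" by (auto simp: I_def joint_index_def)
  have ind: "indep_vars (\<lambda>_. borel) (joint_family S G G') I" by (rule indep_vars_subset[OF indep sub])
  have cardI: "card I = b - a" unfolding I_def using card_image[OF inj] by simp
  have sumI: "(\<Sum>k\<in>I. joint_family S G G' k \<omega>) = (\<Sum>i\<in>{Suc a..b}. G' i \<omega>)" for \<omega>
    unfolding I_def by (subst sum.reindex[OF inj]) (simp_all add: joint_family_def)
  have "measure M {\<omega>\<in>space M. \<epsilon> \<le> \<bar>\<Sum>k\<in>I. joint_family S G G' k \<omega>\<bar>} \<le> 2 * exp (-\<epsilon>\<^sup>2 / (2 * 1 * real (card I)))"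
  proof (rule subg_tail_abs[OF P _ _ ind _ _ eps])
    show "finite I" by (simp add: I_def)
    show "I \<noteq> {}" using ab by (simp add: I_def)
    fix k l assume "k \<in> I"
    then obtain i where i: "i \<ge> 1" "k = Inr (Inr i)" by (auto simp: I_def)
    show "(\<integral>\<^sup>+\<omega>. ennreal (exp (l * joint_family S G G' k \<omega>)) \<partial>M) \<le> ennreal (exp (l\<^sup>2 * 1 / 2))"
      using gauss_mgf[OF gauss'[OF i(1)], of l] i by (simp add: joint_family_def)
  qed simp
  then show ?thesis by (simp add: sumI cardI)
qed

lemma S_tail:
  fixes M :: "'a measure" and S G G' :: "nat \<Rightarrow> 'a \<Rightarrow> real"
  assumes P: "prob_space M"
    and indep: "prob_space.indep_vars M (\<lambda>_. borel) (joint_family S G G') joint_index"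
    and bern_vals: "\<And>n. n \<ge> 1 \<Longrightarrow> AE \<omega> in M. S n \<omega> \<in> {0, 1}"
    and bern_half: "\<And>n. n \<ge> 1 \<Longrightarrow> measure M {\<omega> \<in> space M. S n \<omega> = 1} = 1 / 2"
    and ab: "a < b" and eps: "0 \<le> \<epsilon>"
  shows "measure M {\<omega>\<in>space M. \<epsilon> \<le> \<bar>\<Sum>i\<in>{Suc a..b}. S i \<omega> - 1/2\<bar>} \<le> 2 * exp (-\<epsilon>\<^sup>2 / (1/2 * real (b - a)))"
proof -
  interpret prob_space M by (rule P)
  define I :: "(nat + nat + nat) set" where "I = Inl ` {Suc a..b}"
  have inj: "inj_on (Inl :: nat \<Rightarrow> nat + nat + nat) {Suc a..b}" by (auto simp: inj_on_def)
  have sub: "I \<subseteq> joint_index" by (auto simp: I_def joint_index_def)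
  have ind: "indep_vars (\<lambda>_. borel) (joint_family S G G') I" by (rule indep_vars_subset[OF indep sub])
  have cardI: "card I = b - a" unfolding I_def using card_image[OF inj] by simp
  have sumI: "(\<Sum>k\<in>I. joint_family S G G' k \<omega>) = (\<Sum>i\<in>{Suc a..b}. S i \<omega>)" for \<omega>
    unfolding I_def by (subst sum.reindex[OF inj]) (simp_all add: joint_family_def)
  have Smeas: "S i \<in> borel_measurable M" if "i \<ge> 1" for i
  proof -
    have "Inl i \<in> joint_index" using that by (simp add: joint_index_def)
    then have "random_variable borel (joint_family S G G' (Inl i))" using indep unfolding indep_vars_def by blast
    then show ?thesis by (simp add: joint_family_def)
  qed
  have ES: "expectation (S i) = 1/2" if "i \<ge> 1" for i
  proof -
    have [measurable]: "S i \<in> borel_measurable M" by (rule Smeas[OF that])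
    have "expectation (S i) = expectation (indicator {\<omega>\<in>space M. S i \<omega> = 1})"
      by (rule integral_cong_AE) (use bern_vals[OF that] in \<open>auto simp: indicator_def\<close>)
    also have "\<dots> = measure M {\<omega>\<in>space M. S i \<omega> = 1}" by simp
    finally show ?thesis using bern_half[OF that] by simp
  qed
  interpret H: Hoeffding_ineq M I "joint_family S G G'" "\<lambda>_. 0" "\<lambda>_. 1" "\<Sum>k\<in>I. expectation (joint_family S G G' k)"
  proof unfold_locales
    show "finite I" by (simp add: I_def)
    show "indep_vars (\<lambda>_. borel) (joint_family S G G') I" by (rule ind)
    fix k assume "k \<in> I"
    then obtain i where i: "i \<ge> 1" "k = Inl i" by (auto simp: I_def)
    show "AE x in M. joint_family S G G' k x \<in> {0..1}"
      using bern_vals[OF i(1)] by eventually_elim (auto simp: i joint_family_def)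
  qed simp
  have mu: "(\<Sum>k\<in>I. expectation (joint_family S G G' k)) = real (b - a) / 2"
    unfolding I_def by (subst sum.reindex[OF inj]) (simp_all add: joint_family_def ES)
  have "measure M {\<omega>\<in>space M. \<epsilon> \<le> \<bar>(\<Sum>k\<in>I. joint_family S G G' k \<omega>) - (\<Sum>k\<in>I. expectation (joint_family S G G' k))\<bar>}
      \<le> 2 * exp (-2 * \<epsilon>\<^sup>2 / (\<Sum>k\<in>I. (1 - 0)\<^sup>2))"
    by (rule H.Hoeffding_ineq_abs_ge[OF eps]) (use ab in \<open>simp add: cardI\<close>)
  moreover have "(\<Sum>i\<in>{Suc a..b}. S i \<omega> - 1/2) = (\<Sum>k\<in>I. joint_family S G G' k \<omega>) - (\<Sum>k\<in>I. expectation (joint_family S G G' k))" for \<omega>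
    by (simp add: sumI mu sum_subtractf)
  moreover have "-2 * \<epsilon>\<^sup>2 / (\<Sum>k\<in>I. (1 - 0)\<^sup>2) = -\<epsilon>\<^sup>2 / (1/2 * real (b - a))"
    by (simp add: cardI)
  ultimately show ?thesis by simp
qed



lemma final_ineq:
  fixes t T A B s K1 K2 K3 :: real
  assumes t: "t > 0" and T1: "T \<ge> t/4" and T2: "t - T \<ge> t/4"
    and d: "\<bar>t - 2*T\<bar> \<le> 2*K1* s" and A: "\<bar>A\<bar> \<le> K2* s" and B: "\<bar>B\<bar> \<le> K3* s"
    and s: "s \<ge> 0"
  shows "\<bar>1/2 * (1/T * A + 1/(t-T) * B) - 1/t * (A + B)\<bar> \<le> 4*K1*(K2+K3) * s^2 / t^2"
proof -
  have Tp: "T > 0" and T'p: "t - T > 0" using t T1 T2 by linarith+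
  have e: "1/2 * (1/T * A + 1/(t-T) * B) - 1/t * (A + B) = (t - 2*T) / (2*t) * (A/T - B/(t-T))"
    using Tp T'p t by (simp add: field_simps)
  have a: "\<bar>A/T\<bar> \<le> 4 * (K2* s) / t"
  proof -
    have "\<bar>A/T\<bar> = \<bar>A\<bar> / T" using Tp by simp
    also have "\<dots> \<le> \<bar>A\<bar> / (t/4)" using Tp T1 t by (intro divide_left_mono) (auto intro: mult_pos_pos)
    also have "\<dots> \<le> (K2* s) / (t/4)" using A t by (intro divide_right_mono) auto
    finally show ?thesis by (simp add: ac_simps)
  qed
  have b: "\<bar>B/(t-T)\<bar> \<le> 4 * (K3* s) / t"
  proof -
    have "\<bar>B/(t-T)\<bar> = \<bar>B\<bar> / (t-T)" using T'p by simp
    also have "\<dots> \<le> \<bar>B\<bar> / (t/4)" using T'p T2 t by (intro divide_left_mono) (auto intro: mult_pos_pos)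
    also have "\<dots> \<le> (K3* s) / (t/4)" using B t by (intro divide_right_mono) auto
    finally show ?thesis by (simp add: ac_simps)
  qed
  have "\<bar>A/T - B/(t-T)\<bar> \<le> 4 * (K2* s) / t + 4 * (K3* s) / t" using a b by linarith
  have "\<bar>(t - 2*T) / (2*t) * (A/T - B/(t-T))\<bar> = \<bar>t - 2*T\<bar> / (2*t) * \<bar>A/T - B/(t-T)\<bar>"
    using t by (simp add: abs_mult)
  also have "\<dots> \<le> (2*K1* s) / (2*t) * (4 * (K2* s) / t + 4 * (K3* s) / t)"
    using d t \<open>\<bar>A/T - B/(t-T)\<bar> \<le> _\<close> by (intro mult_mono divide_right_mono) auto
  also have "\<dots> = 4*K1*(K2+K3) * s^2 / t^2" using t by (simp add: field_simps power2_eq_square)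
  finally show ?thesis using e by simp
qed



lemma ev_small:
  fixes c :: real
  shows "eventually (\<lambda>t::nat. c * sqrt (real t * ln (ln (real t))) \<le> real t / 2) sequentially"
proof -
  define N where "N = nat \<lceil>(8*c^2)^2\<rceil> + 27"
  show ?thesis unfolding eventually_sequentially
  proof (intro exI[of _ N] allI impI)
    fix t assume tN: "N \<le> t"
    have t27: "t \<ge> 27" using tN by (simp add: N_def)
    have l1: "ln (ln (real t)) \<ge> 1" and l2: "ln (real t) \<ge> 1" using lnln_ge1[OF t27] by auto
    have tp: "real t > 0" using t27 by simp
    have "(8*c^2)^2 \<le> real (nat \<lceil>(8*c^2)^2\<rceil>)" by (rule real_nat_ceiling_ge)
    also have "\<dots> \<le> real t" using tN by (simp add: N_def)
    finally have "sqrt ((8*c^2)^2) \<le> sqrt (real t)" by (rule real_sqrt_le_mono)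
    then have s: "8*c^2 \<le> sqrt (real t)" by (simp only: real_sqrt_abs)
    have "ln (ln (real t)) \<le> ln (real t) - 1" using l2 by (intro ln_le_minus_one) simp
    also have "\<dots> \<le> 2 * sqrt (real t)" using ln_le_2sqrt[OF tp] by simp
    finally have "4*c^2 * ln (ln (real t)) \<le> 4*c^2 * (2 * sqrt (real t))" by (intro mult_left_mono) auto
    also have "\<dots> = 8*c^2 * sqrt (real t)" by simp
    also have "\<dots> \<le> sqrt (real t) * sqrt (real t)" using s by (intro mult_right_mono) auto
    also have "\<dots> = real t" using tp by simp
    finally have k: "4*c^2 * ln (ln (real t)) \<le> real t" .
    have "c^2 * (real t * ln (ln (real t))) = real t * (4*c^2 * ln (ln (real t))) / 4" by (simp add: algebra_simps)
    also have "\<dots> \<le> real t * real t / 4" using k tp by (intro divide_right_mono mult_left_mono) auto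
    also have "\<dots> = (real t / 2)^2" by (simp add: power2_eq_square)
    finally have "sqrt (c^2 * (real t * ln (ln (real t)))) \<le> sqrt ((real t / 2)^2)" by (rule real_sqrt_le_mono)
    then have "\<bar>c\<bar> * sqrt (real t * ln (ln (real t))) \<le> real t / 2" using tp by (simp add: real_sqrt_mult)
    moreover have "c * sqrt (real t * ln (ln (real t))) \<le> \<bar>c\<bar> * sqrt (real t * ln (ln (real t)))"
      using l1 tp by (intro mult_right_mono) auto
    ultimately show "c * sqrt (real t * ln (ln (real t))) \<le> real t / 2" by linarith
  qed
qed



lemma h_mono:
  assumes "27 \<le> T" "T \<le> (t::nat)"
  shows "sqrt (real T * ln (ln (real T))) \<le> sqrt (real t * ln (ln (real t)))"
proof -
  have l1: "ln (ln (real T)) \<ge> 1" "ln (real T) \<ge> 1" using lnln_ge1 assms(1) by auto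
  have "ln (real T) \<le> ln (real t)" using assms by simp
  then have "ln (ln (real T)) \<le> ln (ln (real t))" using l1 by simp
  then have "real T * ln (ln (real T)) \<le> real t * ln (ln (real t))"
    using assms l1 by (intro mult_mono) auto
  then show ?thesis by simp
qed

lemma unif_bound:
  fixes P :: "nat \<Rightarrow> real"
  assumes "\<forall>n\<ge>27. \<bar>P n\<bar> \<le> K * sqrt (real n * ln (ln (real n)))"
  shows "\<exists>K'\<ge>0. \<forall>t\<ge>27. \<forall>T\<le>t. \<bar>P T\<bar> \<le> K' * sqrt (real t * ln (ln (real t)))"
proof -
  define B where "B = (\<Sum>T<27. \<bar>P T\<bar>)"
  have B0: "B \<ge> 0" unfolding B_def by (intro sum_nonneg) auto
  show ?thesis
  proof (intro exI[of _ "B + \<bar>K\<bar>"] conjI allI impI)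
    show "0 \<le> B + \<bar>K\<bar>" using B0 by simp
    fix t T :: nat assume t: "27 \<le> t" and T: "T \<le> t"
    define h where "h = sqrt (real t * ln (ln (real t)))"
    have h1: "h \<ge> 1"
    proof -
      have "1 \<le> real t * ln (ln (real t))" using lnln_ge1(1)[OF t] t
        using mult_mono[of 1 "real t" 1 "ln (ln (real t))"] by simp
      then show ?thesis by (simp add: h_def)
    qed
    show "\<bar>P T\<bar> \<le> (B + \<bar>K\<bar>) * h"
    proof (cases "T < 27")
      case True
      have "\<bar>P T\<bar> \<le> B" unfolding B_def using True
        by (intro member_le_sum) auto
      also have "\<dots> \<le> B * h" using B0 h1 mult_left_mono[of 1 h B] by simp
      also have "\<dots> \<le> (B + \<bar>K\<bar>) * h" using h1 by (simp add: algebra_simps)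
      finally show ?thesis .
    next
      case False
      then have "\<bar>P T\<bar> \<le> K * sqrt (real T * ln (ln (real T)))" using assms by simp
      also have "\<dots> \<le> \<bar>K\<bar> * sqrt (real T * ln (ln (real T)))"
        using lnln_ge1[of T] False by (intro mult_right_mono) (auto intro!: mult_nonneg_nonneg)
      also have "\<dots> \<le> \<bar>K\<bar> * h" unfolding h_def using False T by (intro mult_left_mono h_mono) auto
      also have "\<dots> \<le> (B + \<bar>K\<bar>) * h" using h1 B0 by (simp add: algebra_simps)
      finally show ?thesis .
    qed
  qed
qed



theorem lemmaC2:
  fixes M :: "'a measure"
    and S G G' :: "nat \<Rightarrow> 'a \<Rightarrow> real"
  assumes "prob_space M"
    and indep: "prob_space.indep_vars M (\<lambda>_. borel) (joint_family S G G') joint_index"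
    and bern_vals: "\<And>n. n \<ge> 1 \<Longrightarrow> AE \<omega> in M. S n \<omega> \<in> {0, 1}"
    and bern_half: "\<And>n. n \<ge> 1 \<Longrightarrow> measure M {\<omega> \<in> space M. S n \<omega> = 1} = 1 / 2"
    and gauss: "\<And>n. n \<ge> 1 \<Longrightarrow> distributed M lborel (G n) std_normal_density"
    and gauss': "\<And>n. n \<ge> 1 \<Longrightarrow> distributed M lborel (G' n) std_normal_density"
  shows "AE \<omega> in M.
    (\<lambda>t::nat.
       (let T = succ_count S t \<omega>; T' = t - T in
          1 / 2 * (1 / real T * (\<Sum>i = 1..T. G i \<omega>) + 1 / real T' * (\<Sum>i = 1..T'. G' i \<omega>))
          - 1 / real t * ((\<Sum>i = 1..T. G i \<omega>) + (\<Sum>i = 1..T'. G' i \<omega>))))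
    \<in> O(\<lambda>t. ln (ln (real t)) / real t)"
proof -
  note P = \<open>prob_space M\<close>
  interpret prob_space M by (rule P)
  have Sm: "S i \<in> borel_measurable M" if "i \<ge> 1" for i
  proof -
    have "Inl i \<in> joint_index" using that by (simp add: joint_index_def)
    then have "random_variable borel (joint_family S G G' (Inl i))" using indep unfolding indep_vars_def by blast
    then show ?thesis by (simp add: joint_family_def)
  qed
  have Gm: "G i \<in> borel_measurable M" if "i \<ge> 1" for i
    using distributed_measurable[OF gauss[OF that]] by simp
  have G'm: "G' i \<in> borel_measurable M" if "i \<ge> 1" for i
    using distributed_measurable[OF gauss'[OF that]] by simp
  have AES: "AE \<omega> in M. \<forall>i. i \<ge> 1 \<longrightarrow> S i \<omega> \<in> {0,1}"
  proof (subst AE_all_countable, intro allI)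
    fix i :: nat
    show "AE \<omega> in M. 1 \<le> i \<longrightarrow> S i \<omega> \<in> {0,1}"
    proof (cases "1 \<le> i")
      case True
      show ?thesis using bern_vals[OF True] by eventually_elim simp
    qed simp
  qed
  have AE1: "AE \<omega> in M. \<exists>K. \<forall>n\<ge>27. \<bar>\<Sum>i\<in>{1..n}. S i \<omega> - 1/2\<bar> \<le> K * sqrt (real n * ln (ln (real n)))"
  proof (rule chain_AE[OF P, where C="1/2"])
    fix i :: nat assume i: "1 \<le> i"
    show "(\<lambda>\<omega>. S i \<omega> - 1/2) \<in> borel_measurable M" using Sm[OF i] by simp
  next
    fix a b :: nat and \<epsilon> :: real assume "a < b" "0 \<le> \<epsilon>"
    then show "measure M {\<omega>\<in>space M. \<epsilon> \<le> \<bar>\<Sum>i\<in>{Suc a..b}. S i \<omega> - 1/2\<bar>} \<le> 2 * exp (-\<epsilon>\<^sup>2 / (1/2 * real (b - a)))"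
      using S_tail[OF P indep bern_vals bern_half] by blast
  qed simp
  have AE2: "AE \<omega> in M. \<exists>K. \<forall>n\<ge>27. \<bar>\<Sum>i\<in>{1..n}. G i \<omega>\<bar> \<le> K * sqrt (real n * ln (ln (real n)))"
  proof (rule chain_AE[OF P, where C="2"])
    fix i :: nat assume i: "1 \<le> i"
    show "G i \<in> borel_measurable M" using Gm[OF i] by simp
  next
    fix a b :: nat and \<epsilon> :: real assume "a < b" "0 \<le> \<epsilon>"
    then show "measure M {\<omega>\<in>space M. \<epsilon> \<le> \<bar>\<Sum>i\<in>{Suc a..b}. G i \<omega>\<bar>} \<le> 2 * exp (-\<epsilon>\<^sup>2 / (2 * real (b - a)))"
      using G_tail[OF P indep gauss] by blast
  qed simp
  have AE3: "AE \<omega> in M. \<exists>K. \<forall>n\<ge>27. \<bar>\<Sum>i\<in>{1..n}. G' i \<omega>\<bar> \<le> K * sqrt (real n * ln (ln (real n)))"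
  proof (rule chain_AE[OF P, where C="2"])
    fix i :: nat assume i: "1 \<le> i"
    show "G' i \<in> borel_measurable M" using G'm[OF i] by simp
  next
    fix a b :: nat and \<epsilon> :: real assume "a < b" "0 \<le> \<epsilon>"
    then show "measure M {\<omega>\<in>space M. \<epsilon> \<le> \<bar>\<Sum>i\<in>{Suc a..b}. G' i \<omega>\<bar>} \<le> 2 * exp (-\<epsilon>\<^sup>2 / (2 * real (b - a)))"
      using G2_tail[OF P indep gauss'] by blast
  qed simp
  show ?thesis using AES AE1 AE2 AE3
  proof eventually_elim
    case (elim \<omega>)
    define h where "h t = sqrt (real t * ln (ln (real t)))" for t :: nat
    from elim(2) obtain K1 where K1: "\<And>n. n \<ge> 27 \<Longrightarrow> \<bar>\<Sum>i\<in>{1..n}. S i \<omega> - 1/2\<bar> \<le> K1 * h n"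
      unfolding h_def by blast
    from elim(3) obtain K2' where "\<forall>n\<ge>27. \<bar>\<Sum>i\<in>{1..n}. G i \<omega>\<bar> \<le> K2' * sqrt (real n * ln (ln (real n)))" by blast
    from unif_bound[OF this] obtain K2 where K2: "K2 \<ge> 0" "\<And>t T. t \<ge> 27 \<Longrightarrow> T \<le> t \<Longrightarrow> \<bar>\<Sum>i\<in>{1..T}. G i \<omega>\<bar> \<le> K2 * h t"
      unfolding h_def by blast
    from elim(4) obtain K3' where "\<forall>n\<ge>27. \<bar>\<Sum>i\<in>{1..n}. G' i \<omega>\<bar> \<le> K3' * sqrt (real n * ln (ln (real n)))" by blast
    from unif_bound[OF this] obtain K3 where K3: "K3 \<ge> 0" "\<And>t T. t \<ge> 27 \<Longrightarrow> T \<le> t \<Longrightarrow> \<bar>\<Sum>i\<in>{1..T}. G' i \<omega>\<bar> \<le> K3 * h t"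
      unfolding h_def by blast
    define Tc where "Tc t = succ_count S t \<omega>" for t
    have Tle: "Tc t \<le> t" for t
    proof -
      have "Tc t \<le> card {1..t}" unfolding Tc_def succ_count_def by (intro card_mono) auto
      then show ?thesis by simp
    qed
    have Tsum: "(\<Sum>i\<in>{1..t}. S i \<omega> - 1/2) = real (Tc t) - real t / 2" for t
    proof -
      have "(\<Sum>i\<in>{1..t}. S i \<omega>) = (\<Sum>i\<in>{1..t}. if S i \<omega> = 1 then 1 else 0)"
        using elim(1) by (intro sum.cong) auto
      also have "\<dots> = (\<Sum>i\<in>{i\<in>{1..t}. S i \<omega> = 1}. 1)" by (rule sum.inter_filter[symmetric]) simp
      also have "\<dots> = real (Tc t)" by (simp add: Tc_def succ_count_def)
      finally show ?thesis by (simp add: sum_subtractf)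
    qed
    have d: "\<bar>real t - 2 * real (Tc t)\<bar> \<le> 2 * \<bar>K1\<bar> * h t" if "t \<ge> 27" for t
    proof -
      have "\<bar>real (Tc t) - real t / 2\<bar> \<le> K1 * h t" using K1[OF that, unfolded Tsum] .
      also have "\<dots> \<le> \<bar>K1\<bar> * h t" using lnln_ge1[OF that] by (intro mult_right_mono) (auto simp: h_def)
      finally show ?thesis by simp
    qed
    obtain t0 where t0: "\<And>t. t \<ge> t0 \<Longrightarrow> 2 * \<bar>K1\<bar> * h t \<le> real t / 2"
      using ev_small[of "2 * \<bar>K1\<bar>"] unfolding h_def eventually_sequentially by blast
    show ?case
    proof (rule bigoI[where c = "4 * \<bar>K1\<bar> * (K2 + K3)"], unfold eventually_at_top_linorder, intro exI allI impI)
      fix t :: nat assume t: "t \<ge> max 27 t0"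
      then have t27: "t \<ge> 27" and tt0: "t \<ge> t0" by auto
      define T where "T = Tc t"
      have tp: "real t > 0" using t27 by simp
      have dd: "\<bar>real t - 2 * real T\<bar> \<le> real t / 2" using d[OF t27] t0[OF tt0] by (simp add: T_def)
      have T1: "real T \<ge> real t / 4" and T2: "real t - real T \<ge> real t / 4" using dd by linarith+
      have TT: "real (t - T) = real t - real T" using Tle[of t] by (simp add: T_def of_nat_diff)
      have ll: "ln (ln (real t)) \<ge> 1" using lnln_ge1(1)[OF t27] .
      have hsq: "(h t)^2 = real t * ln (ln (real t))" unfolding h_def using ll tp by (intro real_sqrt_pow2) auto
      have "\<bar>1/2 * (1/real T * (\<Sum>i = 1..T. G i \<omega>) + 1/(real t - real T) * (\<Sum>i = 1..t - T. G' i \<omega>))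
            - 1 / real t * ((\<Sum>i = 1..T. G i \<omega>) + (\<Sum>i = 1..t - T. G' i \<omega>))\<bar>
            \<le> 4 * \<bar>K1\<bar> * (K2 + K3) * (h t)^2 / (real t)^2"
        by (rule final_ineq[OF tp T1 T2 d[OF t27, folded T_def] K2(2)[OF t27] K3(2)[OF t27]])
           (use ll tp in \<open>auto simp: T_def Tle h_def\<close>)
      also have "\<dots> = 4 * \<bar>K1\<bar> * (K2 + K3) * (ln (ln (real t)) / real t)"
        using tp by (simp only: hsq) (simp add: power2_eq_square field_simps)
      finally show "norm (let T = succ_count S t \<omega>; T' = t - T in
          1 / 2 * (1 / real T * (\<Sum>i = 1..T. G i \<omega>) + 1 / real T' * (\<Sum>i = 1..T'. G' i \<omega>))
          - 1 / real t * ((\<Sum>i = 1..T. G i \<omega>) + (\<Sum>i = 1..T'. G' i \<omega>)))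
        \<le> 4 * \<bar>K1\<bar> * (K2 + K3) * norm (ln (ln (real t)) / real t)"
        using ll tp by (simp add: Let_def T_def[symmetric] Tc_def[symmetric] TT)
    qed
  qed
qed

end
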